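(* If $t$ is a canonical term of $\Phi$ and $t\rightarrow u$ in $\Phi$, then $\langle\!\langle t\rangle\!\rangle\rightarrow_v\langle\!\langle u\rangle\!\rangle$.
   Context: $\lambda$-terms: $M::=x\mid\lambda x.M\mid MN$, variables from a set $\Upsilon$ with a fixed total order, $FV(M)$ the ordered sequence of free variables. Values $V::=x\mid\lambda x.M$; weak call-by-value reduction $\rightarrow_v$: $(\lambda x.M)V\rightarrow_v M\{V/x\}$ for values $V$, closed under $ML$ and $LM$ contexts (no reduction under $\lambda$). $\Phi$: binary function symbol $\mathbf{app}$, constructors $c_{x,M}$ ($M$ a $\lambda$-term, $x\in\Upsilon$) of arity the length of $FV(\lambda x.M)$; $[\![x]\!]=x$, $[\![\lambda x.M]\!]=c_{x,M}(x_1,\dots,x_n)$ with $FV(\lambda x.M)=x_1,\dots,x_n$, $[\![MN]\!]=\mathbf{app}([\![M]\!],[\![N]\!])$; rules $\mathbf{app}(c_{x,M}(x_1,\dots,x_n),x)\rightarrow[\![M]\!]$; rewriting is call-by-value (a step replaces anywhere a subterm $l\sigma$ by $r\sigma$, $\sigma$ mapping variables to constructor terms, i.e. closed terms built only from constructors). $\langle\!\langle x\rangle\!\rangle=x$, $\langle\!\langle\mathbf{app}(u,v)\rangle\!\rangle=\langle\!\langle u\rangle\!\rangle\langle\!\langle v\rangle\!\rangle$, $\langle\!\langle c_{x,M}(t_1,\dots,t_n)\rangle\!\rangle=(\lambda x.M)\{\langle\!\langle t_1\rangle\!\rangle/x_1,\dots,\langle\!\langle t_n\rangle\!\rangle/x_n\}$.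 A closed term $t$ is canonical if it is a constructor term or $t=\mathbf{app}(u,v)$ with $u,v$ canonical. *)

theory Defs
  imports Main "HOL-Library.Infinite_Typeclass"
begin

datatype 'v lterm = Var 'v | Lam 'v "'v lterm" | App "'v lterm" "'v lterm"

primrec fv :: "'v lterm \<Rightarrow> 'v set" where
  "fv (Var x) = {x}"
| "fv (Lam x M) = fv M - {x}"
| "fv (App M N) = fv M \<union> fv N"

definition FVs :: "('v::linorder) lterm \<Rightarrow> 'v list" where
  "FVs M = sorted_list_of_set (fv M)"

primrec ssubst :: "('v::infinite \<Rightarrow> 'v lterm) \<Rightarrow> 'v lterm \<Rightarrow> 'v lterm" where
  "ssubst \<sigma> (Var x) = \<sigma> x"
| "ssubst \<sigma> (App M N) = App (ssubst \<sigma> M) (ssubst \<sigma> N)"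
| "ssubst \<sigma> (Lam y M) =
     (let S = (\<Union>w \<in> fv (Lam y M). fv (\<sigma> w));
          z = (if y \<in> S then (SOME z. z \<notin> S) else y)
      in Lam z (ssubst (\<sigma>(y := Var z)) M))"

definition subst1 :: "('v::infinite) lterm \<Rightarrow> 'v \<Rightarrow> 'v lterm \<Rightarrow> 'v lterm" where
  "subst1 M x N = ssubst (Var(x := N)) M"

fun is_value :: "'v lterm \<Rightarrow> bool" where
  "is_value (Var _) = True"
| "is_value (Lam _ _) = True"
| "is_value (App _ _) = False"

inductive vstep :: "('v::infinite) lterm \<Rightarrow> 'v lterm \<Rightarrow> bool" where
  beta: "is_value V \<Longrightarrow> vstep (App (Lam x M) V) (subst1 M x V)"
| appL: "vstep M M' \<Longrightarrow> vstep (App M L) (App M' L)"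
| appR: "vstep M M' \<Longrightarrow> vstep (App L M) (App L M')"

text \<open>Terms of Phi: variables, the binary symbol app, and constructors c_{x,M}.\<close>
datatype 'v trm = TVar 'v | TApp "'v trm" "'v trm" | Con 'v "'v lterm" "'v trm list"

fun constr_term :: "('v::linorder) trm \<Rightarrow> bool" where
  "constr_term (TVar _) = False"
| "constr_term (TApp _ _) = False"
| "constr_term (Con x M ts) =
     (length ts = length (FVs (Lam x M)) \<and> (\<forall>t \<in> set ts. constr_term t))"

fun canonical :: "('v::linorder) trm \<Rightarrow> bool" where
  "canonical (TVar _) = False"
| "canonical (TApp u v) = (canonical u \<and> canonical v)"
| "canonical (Con x M ts) = constr_term (Con x M ts)"

fun tr :: "('v::linorder) lterm \<Rightarrow> 'v trm" where
  "tr (Var x) = TVar x"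
| "tr (Lam x M) = Con x M (map TVar (FVs (Lam x M)))"
| "tr (App M N) = TApp (tr M) (tr N)"

primrec tsubst :: "('v \<Rightarrow> 'v trm) \<Rightarrow> 'v trm \<Rightarrow> 'v trm" where
  "tsubst \<sigma> (TVar x) = \<sigma> x"
| "tsubst \<sigma> (TApp u v) = TApp (tsubst \<sigma> u) (tsubst \<sigma> v)"
| "tsubst \<sigma> (Con x M ts) = Con x M (map (tsubst \<sigma>) ts)"

text \<open>Call-by-value rewriting in Phi with the rules
  app(c_{x,M}(x1,...,xn), x) -> [[M]]; substitutions map variables to
  constructor terms; steps may occur anywhere.\<close>
inductive rstep :: "('v::linorder) trm \<Rightarrow> 'v trm \<Rightarrow> bool" where
  root: "(\<forall>w \<in> insert x (set (FVs (Lam x M))). constr_term (\<sigma> w)) \<Longrightarrow>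
         rstep (TApp (tsubst \<sigma> (Con x M (map TVar (FVs (Lam x M))))) (\<sigma> x))
               (tsubst \<sigma> (tr M))"
| appL: "rstep u u' \<Longrightarrow> rstep (TApp u v) (TApp u' v)"
| appR: "rstep v v' \<Longrightarrow> rstep (TApp u v) (TApp u v')"
| con: "i < length ts \<Longrightarrow> rstep (ts ! i) t' \<Longrightarrow> rstep (Con x M ts) (Con x M (ts[i := t']))"

fun untr :: "('v::{linorder,infinite}) trm \<Rightarrow> 'v lterm" where
  "untr (TVar x) = Var x"
| "untr (TApp u v) = App (untr u) (untr v)"
| "untr (Con x M ts) =
     ssubst (\<lambda>w. case map_of (zip (FVs (Lam x M)) (map untr ts)) w of
                   None \<Rightarrow> Var w | Some N \<Rightarrow> N) (Lam x M)"

end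

theory Submission
  imports Defs
begin

primrec nsubst :: "('v \<Rightarrow> 'v lterm) \<Rightarrow> 'v lterm \<Rightarrow> 'v lterm" where
  "nsubst \<sigma> (Var x) = \<sigma> x"
| "nsubst \<sigma> (App M N) = App (nsubst \<sigma> M) (nsubst \<sigma> N)"
| "nsubst \<sigma> (Lam y M) = Lam y (nsubst (\<sigma>(y := Var y)) M)"

lemma finite_fv: "finite (fv M)"
  by (induction M) auto

lemma set_FVs: "set (FVs M) = fv M"
  by (simp add: FVs_def finite_fv)

lemma ssubst_nsubst:
  "(\<forall>w\<in>fv M. fv (\<sigma> w) \<subseteq> {w}) \<Longrightarrow> ssubst \<sigma> M = nsubst \<sigma> M"
proof (induction M arbitrary: \<sigma>)
  case (Var x) then show ?case by simp
next
  case (App M N) then show ?case by simp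
next
  case (Lam y M)
  let ?S = "\<Union>w \<in> fv (Lam y M). fv (\<sigma> w)"
  have "y \<notin> ?S" using Lam.prems by auto
  moreover have "ssubst (\<sigma>(y := Var y)) M = nsubst (\<sigma>(y := Var y)) M"
    using Lam.prems by (intro Lam.IH) auto
  ultimately show ?case by (simp add: Let_def)
qed

lemma nsubst_cong: "(\<forall>w\<in>fv M. \<sigma> w = \<sigma>' w) \<Longrightarrow> nsubst \<sigma> M = nsubst \<sigma>' M"
proof (induction M arbitrary: \<sigma> \<sigma>')
  case (Lam y M)
  have "nsubst (\<sigma>(y := Var y)) M = nsubst (\<sigma>'(y := Var y)) M"
    using Lam.prems by (intro Lam.IH) auto
  then show ?case by simp
qed auto

lemma fv_nsubst: "fv (nsubst \<sigma> M) \<subseteq> (\<Union>w\<in>fv M. fv (\<sigma> w))"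
proof (induction M arbitrary: \<sigma>)
  case (Lam y M)
  have "fv (nsubst (\<sigma>(y := Var y)) M) \<subseteq> (\<Union>w\<in>fv M. fv ((\<sigma>(y := Var y)) w))" by (rule Lam.IH)
  then show ?case by (auto split: if_splits)
qed fastforce+

lemma nsubst_comp:
  "(\<forall>w\<in>fv M. fv (\<sigma>1 w) \<subseteq> {w}) \<Longrightarrow>
   nsubst \<sigma>2 (nsubst \<sigma>1 M) = nsubst (\<lambda>w. nsubst \<sigma>2 (\<sigma>1 w)) M"
proof (induction M arbitrary: \<sigma>1 \<sigma>2)
  case (Var x) then show ?case by simp
next
  case (App M N) then show ?case by simp
next
  case (Lam y N)
  have "nsubst (\<sigma>2(y := Var y)) (nsubst (\<sigma>1(y := Var y)) N)
     = nsubst (\<lambda>w. nsubst (\<sigma>2(y := Var y)) ((\<sigma>1(y := Var y)) w)) N"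
    using Lam.prems by (intro Lam.IH) auto
  also have "\<dots> = nsubst ((\<lambda>w. nsubst \<sigma>2 (\<sigma>1 w))(y := Var y)) N"
  proof (rule nsubst_cong, intro ballI)
    fix w assume w: "w \<in> fv N"
    show "nsubst (\<sigma>2(y := Var y)) ((\<sigma>1(y := Var y)) w) = ((\<lambda>w. nsubst \<sigma>2 (\<sigma>1 w))(y := Var y)) w"
    proof (cases "w = y")
      case True then show ?thesis by simp
    next
      case False
      then have "fv (\<sigma>1 w) \<subseteq> {w}" using Lam.prems w by auto
      then have "nsubst (\<sigma>2(y := Var y)) (\<sigma>1 w) = nsubst \<sigma>2 (\<sigma>1 w)"
        using False by (intro nsubst_cong) auto
      then show ?thesis using False by simp
    qed
  qed
  finally show ?case by simp
qed

lemma nsubst_closed: "fv M = {} \<Longrightarrow> nsubst \<sigma> M = M"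
proof -
  assume "fv M = {}"
  then have "nsubst \<sigma> M = nsubst Var M" by (intro nsubst_cong) auto
  moreover have "nsubst Var M = M"
  proof (induction M)
    case (Lam y M)
    have "Var(y := Var y) = (Var :: 'a \<Rightarrow> 'a lterm)" by auto
    then show ?case using Lam by simp
  qed auto
  ultimately show ?thesis by simp
qed

lemma map_of_zip_P:
  "w \<in> set xs \<Longrightarrow> length xs = length ys \<Longrightarrow> \<forall>y\<in>set ys. P y \<Longrightarrow>
   \<exists>N. map_of (zip xs ys) w = Some N \<and> P N"
proof (induction xs arbitrary: ys)
  case Nil then show ?case by simp
next
  case (Cons a xs)
  then obtain b ys' where ys: "ys = b # ys'" by (cases ys) auto
  show ?case using Cons ys by auto
qed

definition lk :: "('v::linorder) lterm \<Rightarrow> 'v lterm list \<Rightarrow> 'v \<Rightarrow> 'v lterm" where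
  "lk L Ns w = (case map_of (zip (FVs L) Ns) w of None \<Rightarrow> Var w | Some N \<Rightarrow> N)"

lemma untr_Con: "untr (Con x M ts) = ssubst (lk (Lam x M) (map untr ts)) (Lam x M)"
proof -
  have "lk (Lam x M) (map untr ts) = (\<lambda>w. case map_of (zip (FVs (Lam x M)) (map untr ts)) w of
                   None \<Rightarrow> Var w | Some N \<Rightarrow> N)" by (rule ext) (simp add: lk_def)
  then show ?thesis by (simp only: untr.simps)
qed

lemma lk_closed:
  assumes "length (FVs L) = length Ns" "\<forall>N\<in>set Ns. fv N = {}"
  shows "fv (lk L Ns w) \<subseteq> {w}" and "w \<in> fv L \<Longrightarrow> fv (lk L Ns w) = {}"
proof -
  show "w \<in> fv L \<Longrightarrow> fv (lk L Ns w) = {}"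
  proof -
    assume "w \<in> fv L"
    then obtain N where "map_of (zip (FVs L) Ns) w = Some N" "fv N = {}"
      using map_of_zip_P[of w "FVs L" Ns "\<lambda>N. fv N = {}"] assms by (auto simp: set_FVs)
    then show ?thesis by (simp add: lk_def)
  qed
  show "fv (lk L Ns w) \<subseteq> {w}"
  proof (cases "map_of (zip (FVs L) Ns) w")
    case None then show ?thesis by (simp add: lk_def)
  next
    case (Some N)
    then have "N \<in> set Ns" by (meson in_set_zipE map_of_SomeD)
    then show ?thesis using Some assms by (simp add: lk_def)
  qed
qed

lemma lk_val:
  assumes "w \<in> set xs" "FVs L = xs"
  shows "lk L (map f xs) w = f w"
proof -
  have d: "distinct xs" using assms(2) by (auto simp: FVs_def)
  have "map_of (zip xs (map f xs)) w = Some (f w)" using assms(1) d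
    by (induction xs) auto
  then show ?thesis using assms by (simp add: lk_def)
qed

lemma untr_constr_closed: "constr_term t \<Longrightarrow> fv (untr t) = {}"
proof (induction t rule: untr.induct)
  case (1 x) then show ?case by simp
next
  case (2 u v) then show ?case by simp
next
  case (3 x M ts)
  have len: "length (FVs (Lam x M)) = length (map untr ts)" and
    cl: "\<forall>N\<in>set (map untr ts). fv N = {}" using 3 by auto
  have "untr (Con x M ts) = nsubst (lk (Lam x M) (map untr ts)) (Lam x M)"
    unfolding untr_Con using lk_closed(1)[OF len cl] by (intro ssubst_nsubst) auto
  also have "fv \<dots> = {}" using fv_nsubst[of _ "Lam x M"] lk_closed(2)[OF len cl] by blast
  finally show ?case .
qed

lemma constr_no_step: "rstep t u \<Longrightarrow> \<not> constr_term t"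
proof (induction rule: rstep.induct)
  case (con i ts t' x M) then show ?case by auto
qed auto

lemma untr_tr:
  "(\<forall>w\<in>fv M. constr_term (\<sigma> w)) \<Longrightarrow> untr (tsubst \<sigma> (tr M)) = nsubst (\<lambda>w. untr (\<sigma> w)) M"
proof (induction M)
  case (Var x) then show ?case by simp
next
  case (App M N) then show ?case by simp
next
  case (Lam y N)
  let ?L = "Lam y N"
  let ?xs = "FVs ?L"
  have eq: "map (tsubst \<sigma>) (map TVar ?xs) = map \<sigma> ?xs" by simp
  have cl: "\<forall>N\<in>set (map untr (map \<sigma> ?xs)). fv N = {}"
    using Lam.prems untr_constr_closed by (auto simp: set_FVs)
  have len: "length ?xs = length (map untr (map \<sigma> ?xs))" by simp
  have "untr (tsubst \<sigma> (tr ?L)) = ssubst (lk ?L (map untr (map \<sigma> ?xs))) ?L"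
    by (simp only: tr.simps tsubst.simps eq untr_Con)
  also have "\<dots> = nsubst (lk ?L (map untr (map \<sigma> ?xs))) ?L"
    using lk_closed(1)[OF len cl] by (intro ssubst_nsubst) auto
  also have "\<dots> = nsubst (\<lambda>w. untr (\<sigma> w)) ?L"
  proof (rule nsubst_cong, intro ballI)
    fix w assume "w \<in> fv ?L"
    then have "w \<in> set ?xs" by (simp add: set_FVs)
    then show "lk ?L (map untr (map \<sigma> ?xs)) w = untr (\<sigma> w)"
      using lk_val[of w ?xs ?L "\<lambda>w. untr (\<sigma> w)"] by (simp add: comp_def)
  qed
  finally show ?case .
qed

lemma constr_value: "constr_term t \<Longrightarrow> is_value (untr t)"
  by (cases t) (auto simp: Let_def)

lemma root_case:
  fixes \<sigma> :: "'v::{linorder,infinite} \<Rightarrow> 'v trm"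
  assumes H: "\<forall>w \<in> insert x (set (FVs (Lam x M))). constr_term (\<sigma> w)"
  shows "vstep (untr (TApp (tsubst \<sigma> (Con x M (map TVar (FVs (Lam x M))))) (\<sigma> x)))
               (untr (tsubst \<sigma> (tr M)))"
proof -
  let ?L = "Lam x M"
  let ?xs = "FVs ?L"
  let ?\<tau> = "lk ?L (map untr (map \<sigma> ?xs))"
  let ?V = "untr (\<sigma> x)"
  have eq: "map (tsubst \<sigma>) (map TVar ?xs) = map \<sigma> ?xs" by simp
  have cl: "\<forall>N\<in>set (map untr (map \<sigma> ?xs)). fv N = {}"
    using H untr_constr_closed by auto
  have len: "length ?xs = length (map untr (map \<sigma> ?xs))" by simp
  have Vcl: "fv ?V = {}" using H untr_constr_closed by auto
  have Vv: "is_value ?V" using H constr_value by auto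
  have "untr (tsubst \<sigma> (Con x M (map TVar ?xs))) = ssubst ?\<tau> ?L"
    by (simp only: tsubst.simps eq untr_Con)
  also have "\<dots> = nsubst ?\<tau> ?L"
    using lk_closed(1)[OF len cl] by (intro ssubst_nsubst) auto
  finally have u: "untr (tsubst \<sigma> (Con x M (map TVar ?xs))) = Lam x (nsubst (?\<tau>(x := Var x)) M)"
    by simp
  have st: "vstep (App (Lam x (nsubst (?\<tau>(x := Var x)) M)) ?V)
                  (subst1 (nsubst (?\<tau>(x := Var x)) M) x ?V)"
    by (rule vstep.beta[OF Vv])
  have "subst1 (nsubst (?\<tau>(x := Var x)) M) x ?V
      = nsubst (Var(x := ?V)) (nsubst (?\<tau>(x := Var x)) M)"
    unfolding subst1_def using Vcl by (intro ssubst_nsubst) auto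
  also have "\<dots> = nsubst (\<lambda>w. nsubst (Var(x := ?V)) ((?\<tau>(x := Var x)) w)) M"
    using lk_closed(1)[OF len cl] by (intro nsubst_comp) auto
  also have "\<dots> = nsubst (\<lambda>w. untr (\<sigma> w)) M"
  proof (rule nsubst_cong, intro ballI)
    fix w assume w: "w \<in> fv M"
    show "nsubst (Var(x := ?V)) ((?\<tau>(x := Var x)) w) = untr (\<sigma> w)"
    proof (cases "w = x")
      case True then show ?thesis by simp
    next
      case False
      then have wL: "w \<in> fv ?L" using w by simp
      then have "fv (?\<tau> w) = {}" using lk_closed(2)[OF len cl] by simp
      moreover have "?\<tau> w = untr (\<sigma> w)"
        using lk_val[of w ?xs ?L "\<lambda>w. untr (\<sigma> w)"] wL by (simp add: set_FVs comp_def)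
      ultimately show ?thesis using False nsubst_closed by simp
    qed
  qed
  also have "\<dots> = untr (tsubst \<sigma> (tr M))"
  proof (rule untr_tr[symmetric], intro ballI)
    fix w assume "w \<in> fv M"
    then show "constr_term (\<sigma> w)" using H by (cases "w = x") (auto simp: set_FVs)
  qed
  finally show ?thesis using st u by simp
qed

theorem lemma6:
  fixes t u :: "('v::{linorder,infinite}) trm"
  assumes "canonical t" and "rstep t u"
  shows "vstep (untr t) (untr u)"
  using assms(2,1)
proof (induction rule: rstep.induct)
  case (root x M \<sigma>)
  show ?case by (rule root_case[OF root.hyps])
next
  case (appL u u' v) then show ?case by (simp add: vstep.appL)
next
  case (appR v v' u) then show ?case by (simp add: vstep.appR)
next
  case (con i ts t' x M)
  then have "rstep (Con x M ts) (Con x M (ts[i := t']))" by (intro rstep.con)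
  then show ?case using con.prems constr_no_step by force
qed

end
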